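(* Let $r\ge1$ and let $F$ be a graph with chromatic number $\chi(F)=r+1$. Then for every real $p>1$, as $n\to\infty$, $$\mathrm{ex}^{(p)}_\lambda(n,F)=\lambda^{(p)}(T_r(n))+o\!\left(n^{2-2/p}\right)=\left(1-\frac1r+o(1)\right)n^{2-2/p}.$$
   Context: For a graph $G$ on vertex set $\{1,\dots,n\}$ and real $p\ge1$, the $p$-spectral radius is $\lambda^{(p)}(G)=\max\{2\sum_{\{i,j\}\in E(G)}x_ix_j:\ x\in\mathbb R^n,\ |x_1|^p+\dots+|x_n|^p=1\}$. $\mathrm{ex}^{(p)}_\lambda(n,F)$ is the maximum of $\lambda^{(p)}(G)$ over all $n$-vertex graphs $G$ containing no subgraph isomorphic to $F$. $T_r(n)$ is the Turán graph: the complete $r$-partite graph on $n$ vertices with part sizes as equal as possible. *)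

theory Defs
  imports Complex_Main "HOL-Library.Landau_Symbols"
begin

definition graph_on :: "nat \<Rightarrow> nat set set \<Rightarrow> bool" where
  "graph_on n E \<longleftrightarrow> (\<forall>e\<in>E. \<exists>i j. e = {i, j} \<and> i \<noteq> j \<and> i \<in> {1..n} \<and> j \<in> {1..n})"

definition p_spectral_radius :: "real \<Rightarrow> nat \<Rightarrow> nat set set \<Rightarrow> real" where
  "p_spectral_radius p n E =
     Sup {2 * (\<Sum>(i, j)\<in>{(i, j). i \<in> {1..n} \<and> j \<in> {1..n} \<and> i < j \<and> {i, j} \<in> E}. x i * x j)
          | x :: nat \<Rightarrow> real. (\<Sum>i\<in>{1..n}. \<bar>x i\<bar> powr p) = 1}"

definition contains_subgraph :: "nat \<Rightarrow> nat set set \<Rightarrow> nat \<Rightarrow> nat set set \<Rightarrow> bool" where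
  "contains_subgraph n E m EF \<longleftrightarrow>
     (\<exists>f. f ` {1..m} \<subseteq> {1..n} \<and> inj_on f {1..m} \<and> (\<forall>e\<in>EF. f ` e \<in> E))"

definition proper_colouring :: "nat \<Rightarrow> nat set set \<Rightarrow> nat \<Rightarrow> (nat \<Rightarrow> nat) \<Rightarrow> bool" where
  "proper_colouring m EF k c \<longleftrightarrow>
     (\<forall>i\<in>{1..m}. c i < k) \<and> (\<forall>i\<in>{1..m}. \<forall>j\<in>{1..m}. {i, j} \<in> EF \<longrightarrow> i \<noteq> j \<longrightarrow> c i \<noteq> c j)"

definition chromatic_number :: "nat \<Rightarrow> nat set set \<Rightarrow> nat" where
  "chromatic_number m EF = (LEAST k. \<exists>c. proper_colouring m EF k c)"

definition spectral_ex :: "real \<Rightarrow> nat \<Rightarrow> nat \<Rightarrow> nat set set \<Rightarrow> real" where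
  "spectral_ex p n m EF =
     Sup {p_spectral_radius p n E | E. graph_on n E \<and> \<not> contains_subgraph n E m EF}"

text \<open>Turan graph T_r(n) on {1..n}: parts are the residue classes mod r
  (complete r-partite, part sizes as equal as possible).\<close>
definition turan_graph :: "nat \<Rightarrow> nat \<Rightarrow> nat set set" where
  "turan_graph r n = {{i, j} | i j. i \<in> {1..n} \<and> j \<in> {1..n} \<and> i mod r \<noteq> j mod r}"

end

theory Submission
  imports Defs "HOL-Analysis.Analysis"
begin

definition dg :: "(nat \<Rightarrow> nat \<Rightarrow> bool) \<Rightarrow> (nat \<Rightarrow> real) \<Rightarrow> nat set \<Rightarrow> nat \<Rightarrow> real" where
  "dg adj w S v = (\<Sum>u\<in>S. if adj v u then w u else 0)"

definition has_KK :: "(nat \<Rightarrow> nat \<Rightarrow> bool) \<Rightarrow> nat set \<Rightarrow> nat \<Rightarrow> nat \<Rightarrow> bool" where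
  "has_KK adj S k t \<longleftrightarrow> (\<exists>P. (\<forall>a<k. P a \<subseteq> S \<and> card (P a) = t \<and> finite (P a)) \<and>
        (\<forall>a<k. \<forall>b<k. a \<noteq> b \<longrightarrow> (\<forall>x\<in>P a. \<forall>y\<in>P b. adj x y)))"

definition ES_prop :: "nat \<Rightarrow> nat \<Rightarrow> real \<Rightarrow> real \<Rightarrow> bool" where
  "ES_prop j t \<epsilon> \<theta> \<longleftrightarrow> (\<forall>adj w S. (\<forall>x y. adj x y \<longrightarrow> adj y x) \<longrightarrow> (\<forall>x. \<not> adj x x) \<longrightarrow> finite S \<longrightarrow>
      (\<forall>v\<in>S. 0 \<le> w v \<and> w v \<le> \<theta> * sum w S) \<longrightarrow> 0 < sum w S \<longrightarrow>
      (\<forall>v\<in>S. ((real j - 1) / real j + \<epsilon>) * sum w S \<le> dg adj w S v) \<longrightarrow> has_KK adj S (Suc j) t)"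

lemma ES_propD:
  assumes "ES_prop j t \<epsilon> \<theta>" "\<forall>x y. adj x y \<longrightarrow> adj y x" "\<forall>x. \<not> adj x x" "finite S"
    "\<forall>v\<in>S. 0 \<le> w v \<and> w v \<le> \<theta> * sum w S" "0 < sum w S"
    "\<forall>v\<in>S. ((real j - 1) / real j + \<epsilon>) * sum w S \<le> dg adj w S v"
  shows "has_KK adj S (Suc j) t"
  using assms(1)[unfolded ES_prop_def, THEN spec[of _ adj], THEN spec[of _ w], THEN spec[of _ S]] assms(2-)
  by blast

lemma ES_base:
  shows "ES_prop 0 t \<epsilon> (1 / (real t + 1))"
  unfolding ES_prop_def
proof (intro allI impI)
  fix adj :: "nat \<Rightarrow> nat \<Rightarrow> bool" and w :: "nat \<Rightarrow> real" and S :: "nat set"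
  assume fin: "finite S" and wb: "\<forall>v\<in>S. 0 \<le> w v \<and> w v \<le> 1 / (real t + 1) * sum w S"
    and pos: "0 < sum w S"
  have "sum w S \<le> real (card S) * (1 / (real t + 1) * sum w S)"
    using sum_bounded_above[of S w "1 / (real t + 1) * sum w S"] wb by auto
  then have "sum w S * (real t + 1) \<le> sum w S * real (card S)"
    by (simp add: field_simps)
  then have "real t + 1 \<le> real (card S)" using pos by (simp add: mult_le_cancel_left_pos)
  then have "t \<le> card S" by linarith
  then obtain T where T: "T \<subseteq> S" "card T = t" "finite T"
    by (meson obtain_subset_with_card_n)
  show "has_KK adj S (Suc 0) t"
    unfolding has_KK_def
    by (rule exI[of _ "\<lambda>_. T"]) (use T in auto)
qed

lemma ES_step:
  fixes j t T :: nat and \<epsilon> \<theta> \<theta>1 :: real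
  assumes eps: "\<epsilon> > 0" and t1: "t \<ge> 1" and T1: "T \<ge> 1"
    and tT: "real t \<le> \<epsilon> / 2 * real T"
    and IH: "ES_prop j T \<epsilon> \<theta>1" and th0: "\<theta> > 0" and th1: "\<theta> \<le> \<theta>1"
    and thsmall: "(real (Suc j * T) + real t * 2 ^ (Suc j * T)) * \<theta> < \<epsilon> / 2"
  shows "ES_prop (Suc j) t \<epsilon> \<theta>"
  unfolding ES_prop_def
proof (intro allI impI)
  fix adj :: "nat \<Rightarrow> nat \<Rightarrow> bool" and w :: "nat \<Rightarrow> real" and S :: "nat set"
  assume sym: "\<forall>x y. adj x y \<longrightarrow> adj y x" and irr: "\<forall>x. \<not> adj x x" and fin: "finite S"
    and wb: "\<forall>v\<in>S. 0 \<le> w v \<and> w v \<le> \<theta> * sum w S" and pos: "0 < sum w S"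
    and deg: "\<forall>v\<in>S. ((real (Suc j) - 1) / real (Suc j) + \<epsilon>) * sum w S \<le> dg adj w S v"
  define M where "M = sum w S"
  define k where "k = Suc j"
  have k1: "k \<ge> 1" unfolding k_def by simp
  have thr: "(real j - 1) / real j \<le> (real (Suc j) - 1) / real (Suc j)"
  proof (cases "j = 0")
    case False
    then have "real j > 0" by simp
    then show ?thesis by (simp add: field_simps)
  qed simp
  have "has_KK adj S (Suc j) T"
  proof (rule ES_propD[OF IH sym irr fin _ pos])
    have "\<theta> * sum w S \<le> \<theta>1 * sum w S" using th1 pos by (simp add: mult_right_mono)
    then show "\<forall>v\<in>S. 0 \<le> w v \<and> w v \<le> \<theta>1 * sum w S"
      using wb by force
    have "((real j - 1) / real j + \<epsilon>) * sum w S \<le> ((real (Suc j) - 1) / real (Suc j) + \<epsilon>) * sum w S"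
      using thr pos by (simp add: mult_right_mono)
    then show "\<forall>v\<in>S. ((real j - 1) / real j + \<epsilon>) * sum w S \<le> dg adj w S v"
      using deg by force
  qed
  then obtain P where Psub: "\<And>a. a < k \<Longrightarrow> P a \<subseteq> S" and Pcard: "\<And>a. a < k \<Longrightarrow> card (P a) = T"
    and Pfin: "\<And>a. a < k \<Longrightarrow> finite (P a)"
    and Pcomp: "\<And>a b x y. a < k \<Longrightarrow> b < k \<Longrightarrow> a \<noteq> b \<Longrightarrow> x \<in> P a \<Longrightarrow> y \<in> P b \<Longrightarrow> adj x y"
    unfolding has_KK_def k_def by blast
  have Pdisj: "P a \<inter> P b = {}" if "a < k" "b < k" "a \<noteq> b" for a b
    using Pcomp[OF that] irr by blast
  define C where "C = (\<Union>a\<in>{..<k}. P a)"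
  have CS: "C \<subseteq> S" unfolding C_def using Psub by blast
  have finC: "finite C" using CS fin finite_subset by blast
  have cardC: "card C = k * T"
    unfolding C_def using Pfin Pcard Pdisj by (subst card_UN_disjoint) auto
  define f where "f v = {u \<in> C. adj v u}" for v
  define cnt where "cnt v = real (card (f v))" for v
  define good where "good v \<longleftrightarrow> (\<forall>a<k. t \<le> card {u \<in> P a. adj v u})" for v
  have cnt_sum: "cnt v = (\<Sum>u\<in>C. if adj v u then 1 else 0)" for v
    unfolding cnt_def f_def using finC by (simp add: sum.inter_filter[symmetric])
  have A: "(\<Sum>v\<in>S. w v * cnt v) = (\<Sum>u\<in>C. dg adj w S u)"
  proof -
    have "(\<Sum>v\<in>S. w v * cnt v) = (\<Sum>v\<in>S. \<Sum>u\<in>C. if adj v u then w v else 0)"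
      unfolding cnt_sum by (simp add: sum_distrib_left if_distrib cong: if_cong)
    also have "\<dots> = (\<Sum>u\<in>C. \<Sum>v\<in>S. if adj v u then w v else 0)"
      by (rule sum.swap)
    also have "\<dots> = (\<Sum>u\<in>C. dg adj w S u)"
      unfolding dg_def using sym by (intro sum.cong refl) auto
    finally show ?thesis .
  qed
  have B: "real (k * T) * (((real k - 1) / real k + \<epsilon>) * M) \<le> (\<Sum>u\<in>C. dg adj w S u)"
    using sum_bounded_below[of C "((real k - 1) / real k + \<epsilon>) * M" "dg adj w S"] deg CS cardC
    unfolding M_def k_def by auto
  have Ccl: "cnt v \<le> real ((k - 1) * T + t) + real T * (if good v then 1 else 0)" for v
  proof -
    have fv: "f v = (\<Union>a\<in>{..<k}. {u \<in> P a. adj v u})" unfolding f_def C_def by auto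
    have cf: "card (f v) = (\<Sum>a<k. card {u \<in> P a. adj v u})"
      unfolding fv using Pfin Pdisj by (subst card_UN_disjoint) auto
    have le: "card {u \<in> P a. adj v u} \<le> T" if "a < k" for a
      using Pcard[OF that] Pfin[OF that] card_mono[of "P a" "{u \<in> P a. adj v u}"] by auto
    show ?thesis
    proof (cases "good v")
      case True
      have "card (f v) \<le> (\<Sum>a<k. T)" unfolding cf by (intro sum_mono le) auto
      then have "card (f v) \<le> k * T" by simp
      moreover have "k * T = (k - 1) * T + T" using k1 by (cases k) auto
      ultimately have "card (f v) \<le> (k - 1) * T + t + T" by linarith
      then have "real (card (f v)) \<le> real ((k - 1) * T + t + T)" by (simp only: of_nat_le_iff)
      then show ?thesis using True unfolding cnt_def by simp
    next
      case False
      then obtain a0 where a0: "a0 < k" "card {u \<in> P a0. adj v u} < t" unfolding good_def by auto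
      have "card (f v) = card {u \<in> P a0. adj v u} + (\<Sum>a\<in>{..<k} - {a0}. card {u \<in> P a. adj v u})"
        unfolding cf using a0 by (subst sum.remove[of _ a0]) auto
      also have "\<dots> \<le> t + (\<Sum>a\<in>{..<k} - {a0}. T)"
        using a0 le by (intro add_mono sum_mono) auto
      also have "\<dots> = t + (k - 1) * T" using a0 by simp
      finally have "card (f v) \<le> t + (k - 1) * T" .
      then have "real (card (f v)) \<le> real (t + (k - 1) * T)" by (simp only: of_nat_le_iff)
      then show ?thesis using False unfolding cnt_def by simp
    qed
  qed
  define g where "g = (\<Sum>v\<in>{v\<in>S. good v}. w v)"
  have gsum: "g = (\<Sum>v\<in>S. w v * (if good v then 1 else 0))"
    unfolding g_def using fin by (auto simp: sum.inter_filter intro!: sum.cong)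
  have "real (k * T) * (((real k - 1) / real k + \<epsilon>) * M) \<le> (\<Sum>v\<in>S. w v * cnt v)"
    using A B by simp
  also have "\<dots> \<le> (\<Sum>v\<in>S. w v * real ((k - 1) * T + t) + real T * (w v * (if good v then 1 else 0)))"
  proof (intro sum_mono)
    fix v assume "v \<in> S"
    then have "w v * cnt v \<le> w v * (real ((k - 1) * T + t) + real T * (if good v then 1 else 0))"
      using wb Ccl[of v] by (intro mult_left_mono) auto
    then show "w v * cnt v \<le> w v * real ((k - 1) * T + t) + real T * (w v * (if good v then 1 else 0))"
      by (simp add: algebra_simps)
  qed
  also have "\<dots> = real ((k - 1) * T + t) * M + real T * g"
    unfolding gsum M_def by (simp add: sum.distrib sum_distrib_left sum_distrib_right algebra_simps)
  finally have D0: "real (k * T) * (((real k - 1) / real k + \<epsilon>) * M) \<le> real ((k - 1) * T + t) * M + real T * g" .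
  have kk: "real (k * T) * ((real k - 1) / real k) = real ((k - 1) * T)"
    using k1 by (simp add: field_simps of_nat_diff)
  have "real (k * T) * (((real k - 1) / real k + \<epsilon>) * M) = real ((k - 1) * T) * M + real (k * T) * \<epsilon> * M"
  proof -
    have gen: "\<And>x a e M :: real. x * ((a + e) * M) = (x * a) * M + x * e * M" by (simp add: algebra_simps)
    show ?thesis unfolding gen kk ..
  qed
  with D0 have D1: "real (k * T) * \<epsilon> * M \<le> real t * M + real T * g" by (simp add: distrib_right)
  have Mpos: "M > 0" using pos M_def by simp
  have "real T * \<epsilon> * M \<le> real (k * T) * \<epsilon> * M"
  proof -
    have "1 * T \<le> k * T" using k1 by (rule mult_le_mono1)
    then have "real T \<le> real (k * T)" by (simp only: of_nat_le_iff mult_1)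
    then show ?thesis using eps Mpos by (intro mult_right_mono) auto
  qed
  with D1 have "real T * \<epsilon> * M \<le> real t * M + real T * g" by linarith
  moreover have "real t * M \<le> \<epsilon> / 2 * real T * M" using tT Mpos by (simp add: mult_right_mono)
  ultimately have "real T * (\<epsilon> / 2 * M) \<le> real T * g" by (simp add: algebra_simps)
  then have D: "\<epsilon> / 2 * M \<le> g" using T1 by (simp add: mult_le_cancel_left_pos)
  define G' where "G' = {v \<in> S. good v \<and> v \<notin> C}"
  have finG': "finite G'" unfolding G'_def using fin by simp
  have "g \<le> sum w (G' \<union> C)"
    unfolding g_def using fin finC wb CS by (intro sum_mono2) (auto simp: G'_def)
  also have "\<dots> = sum w G' + sum w C" using finG' finC by (intro sum.union_disjoint) (auto simp: G'_def)
  also have "sum w C \<le> real (card C) * (\<theta> * M)"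
    using sum_bounded_above[of C w "\<theta> * M"] wb CS unfolding M_def by auto
  finally have E: "g \<le> sum w G' + real (k * T) * \<theta> * M" using cardC by simp
  have "\<exists>X. t \<le> card {v \<in> G'. f v = X}"
  proof (rule ccontr)
    assume "\<not> ?thesis"
    then have small: "card {v \<in> G'. f v = X} \<le> t" for X by (meson not_le less_imp_le)
    have "sum w G' = (\<Sum>X\<in>f ` G'. sum w {v \<in> G'. f v = X})"
      using finG' by (rule sum.image_gen)
    also have "\<dots> \<le> (\<Sum>X\<in>f ` G'. real t * (\<theta> * M))"
    proof (intro sum_mono)
      fix X
      have "sum w {v \<in> G'. f v = X} \<le> real (card {v \<in> G'. f v = X}) * (\<theta> * M)"
        using sum_bounded_above[of "{v \<in> G'. f v = X}" w "\<theta> * M"] wb unfolding G'_def M_def by auto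
      also have "\<dots> \<le> real t * (\<theta> * M)"
        using small[of X] th0 Mpos by (intro mult_right_mono) auto
      finally show "sum w {v \<in> G'. f v = X} \<le> real t * (\<theta> * M)" .
    qed
    also have "\<dots> = real (card (f ` G')) * (real t * (\<theta> * M))" by simp
    also have "\<dots> \<le> 2 ^ (k * T) * (real t * (\<theta> * M))"
    proof (intro mult_right_mono)
      have "f ` G' \<subseteq> Pow C" unfolding f_def by auto
      then have "card (f ` G') \<le> card (Pow C)" using finC by (intro card_mono) auto
      then have "card (f ` G') \<le> 2 ^ (k * T)" using finC cardC by (simp add: card_Pow)
      then show "real (card (f ` G')) \<le> 2 ^ (k * T)"
      proof -
        have "real (card (f ` G')) \<le> real (2 ^ (k * T))" using \<open>card (f ` G') \<le> 2 ^ (k * T)\<close> by (simp only: of_nat_le_iff)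
        then show ?thesis by simp
      qed
    qed (use th0 Mpos in auto)
    finally have "sum w G' \<le> 2 ^ (k * T) * (real t * (\<theta> * M))" .
    with E D have "\<epsilon> / 2 * M \<le> (real (k * T) + real t * 2 ^ (k * T)) * \<theta> * M"
      by (simp add: algebra_simps)
    moreover have "(real (k * T) + real t * 2 ^ (k * T)) * \<theta> * M < \<epsilon> / 2 * M"
      using thsmall Mpos unfolding k_def by (simp add: mult_strict_right_mono)
    ultimately show False by simp
  qed
  then obtain X where X: "t \<le> card {v \<in> G'. f v = X}" by blast
  then obtain Q where Q: "Q \<subseteq> {v \<in> G'. f v = X}" "card Q = t" "finite Q"
    by (meson obtain_subset_with_card_n)
  then obtain v0 where v0: "v0 \<in> Q" using t1 by fastforce
  then have v0good: "good v0" and v0G: "v0 \<in> G'" "f v0 = X" using Q unfolding G'_def by auto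
  have "\<forall>a. \<exists>R. a < k \<longrightarrow> R \<subseteq> {u \<in> P a. adj v0 u} \<and> card R = t \<and> finite R"
  proof
    fix a
    show "\<exists>R. a < k \<longrightarrow> R \<subseteq> {u \<in> P a. adj v0 u} \<and> card R = t \<and> finite R"
    proof (cases "a < k")
      case True
      then have "t \<le> card {u \<in> P a. adj v0 u}" using v0good unfolding good_def by auto
      then show ?thesis by (meson obtain_subset_with_card_n)
    qed auto
  qed
  then obtain R where R0: "\<forall>a. a < k \<longrightarrow> R a \<subseteq> {u \<in> P a. adj v0 u} \<and> card (R a) = t \<and> finite (R a)"
    by (rule choice[THEN exE]) blast
  then have R: "\<And>a. a < k \<Longrightarrow> R a \<subseteq> {u \<in> P a. adj v0 u} \<and> card (R a) = t \<and> finite (R a)"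
    by blast
  define P' where "P' a = (if a < k then R a else Q)" for a
  show "has_KK adj S (Suc (Suc j)) t"
    unfolding has_KK_def
  proof (intro exI[of _ P'] conjI allI impI ballI)
    fix a assume a: "a < Suc (Suc j)"
    show "P' a \<subseteq> S" "card (P' a) = t" "finite (P' a)"
      using R Psub Q unfolding P'_def G'_def by (auto split: if_splits)
  next
    fix a b x y assume a: "a < Suc (Suc j)" and b: "b < Suc (Suc j)" and ab: "a \<noteq> b"
      and x: "x \<in> P' a" and y: "y \<in> P' b"
    have Qadj: "adj q u" if "q \<in> Q" "u \<in> R c" "c < k" for q u c
    proof -
      have "u \<in> P c" "adj v0 u" using R[OF that(3)] that(2) by auto
      then have "u \<in> f v0" unfolding f_def C_def using that(3) by auto
      moreover have "f q = f v0" using Q that(1) v0G by auto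
      ultimately show ?thesis unfolding f_def by auto
    qed
    show "adj x y"
    proof (cases "a < k")
      case True
      note a' = True
      show ?thesis
      proof (cases "b < k")
        case True
        then show ?thesis using a' R x y ab Pcomp[of a b x y] unfolding P'_def by auto
      next
        case False
        then have "y \<in> Q" using y unfolding P'_def by auto
        then show ?thesis using Qadj[of y x a] x a' sym unfolding P'_def by auto
      qed
    next
      case False
      then have "x \<in> Q" using x unfolding P'_def by auto
      moreover have "b < k" using False a b ab unfolding k_def by auto
      ultimately show ?thesis using Qadj[of x y b] y unfolding P'_def by auto
    qed
  qed
qed

lemma has_KK_0: "has_KK adj S k 0"
  unfolding has_KK_def by (rule exI[of _ "\<lambda>_. {}"]) auto

lemma ES_prop_0: "ES_prop j 0 \<epsilon> \<theta>"
  unfolding ES_prop_def using has_KK_0 by blast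

lemma ES_exists:
  fixes \<epsilon> :: real
  assumes eps: "\<epsilon> > 0"
  shows "\<exists>\<theta>>0. ES_prop j t \<epsilon> \<theta>"
proof (induction j arbitrary: t)
  case 0
  show ?case using ES_base[of t \<epsilon>] by (intro exI[of _ "1 / (real t + 1)"]) auto
next
  case (Suc j)
  show ?case
  proof (cases "t = 0")
    case True
    then show ?thesis using ES_prop_0 by (intro exI[of _ 1]) auto
  next
    case False
    then have t1: "t \<ge> 1" by simp
    define T where "T = nat \<lceil>2 * real t / \<epsilon>\<rceil> + 1"
    have T1: "T \<ge> 1" unfolding T_def by simp
    have "2 * real t / \<epsilon> \<le> real T" unfolding T_def by linarith
    then have "2 * real t \<le> real T * \<epsilon>" using eps by (simp add: field_simps)
    then have tT: "real t \<le> \<epsilon> / 2 * real T" by (simp add: algebra_simps)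
    obtain \<theta>1 where th1: "\<theta>1 > 0" "ES_prop j T \<epsilon> \<theta>1" using Suc.IH by blast
    define A where "A = real (Suc j * T) + real t * 2 ^ (Suc j * T)"
    have Apos: "A > 0"
    proof -
      have "0 < Suc j * T" using T1 by simp
      then have "0 < real (Suc j * T)" by (simp only: of_nat_0_less_iff)
      moreover have "0 \<le> real t * 2 ^ (Suc j * T)" by simp
      ultimately show ?thesis unfolding A_def by linarith
    qed
    define \<theta> where "\<theta> = min \<theta>1 (\<epsilon> / (4 * A))"
    have th0: "\<theta> > 0" unfolding \<theta>_def using th1 eps Apos by simp
    have "A * \<theta> \<le> A * (\<epsilon> / (4 * A))" unfolding \<theta>_def using Apos by (intro mult_left_mono) auto
    also have "\<dots> = \<epsilon> / 4" using Apos by simp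
    also have "\<dots> < \<epsilon> / 2" using eps by simp
    finally have "A * \<theta> < \<epsilon> / 2" .
    then have "ES_prop (Suc j) t \<epsilon> \<theta>"
      using ES_step[OF eps t1 T1 tT th1(2) th0] unfolding A_def \<theta>_def by auto
    then show ?thesis using th0 by blast
  qed
qed

definition psum :: "(nat \<Rightarrow> nat \<Rightarrow> bool) \<Rightarrow> (nat \<Rightarrow> real) \<Rightarrow> nat set \<Rightarrow> real" where
  "psum adj w S = (\<Sum>v\<in>S. w v * dg adj w S v)"

lemma dg_remove:
  assumes "finite S" "v \<in> S"
  shows "dg adj w S u = dg adj w (S - {v}) u + (if adj u v then w v else 0)"
  unfolding dg_def using assms by (simp add: sum.remove[of S v] algebra_simps)

lemma psum_remove:
  assumes sym: "\<forall>x y. adj x y \<longrightarrow> adj y x" and irr: "\<forall>x. \<not> adj x x"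
    and fin: "finite S" and v: "v \<in> S"
  shows "psum adj w S = psum adj w (S - {v}) + 2 * w v * dg adj w S v"
proof -
  have "psum adj w S = w v * dg adj w S v + (\<Sum>u\<in>S - {v}. w u * dg adj w S u)"
    unfolding psum_def using fin v by (simp add: sum.remove[of S v])
  also have "(\<Sum>u\<in>S - {v}. w u * dg adj w S u)
      = (\<Sum>u\<in>S - {v}. w u * dg adj w (S - {v}) u) + (\<Sum>u\<in>S - {v}. w u * (if adj u v then w v else 0))"
    using dg_remove[OF fin v] by (simp add: sum.distrib algebra_simps)
  also have "(\<Sum>u\<in>S - {v}. w u * (if adj u v then w v else 0)) = w v * dg adj w (S - {v}) v"
    unfolding dg_def sum_distrib_left using sym by (intro sum.cong refl) auto
  also have "dg adj w (S - {v}) v = dg adj w S v"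
    using dg_remove[OF fin v, of adj w v] irr by simp
  finally show ?thesis unfolding psum_def by simp
qed

lemma dg_le:
  assumes "finite S" "\<forall>u\<in>S. 0 \<le> w u"
  shows "dg adj w S v \<le> sum w S" "0 \<le> dg adj w S v"
  unfolding dg_def using assms by (auto intro!: sum_mono sum_nonneg)

lemma psum_le:
  assumes "finite S" "\<forall>u\<in>S. 0 \<le> w u"
  shows "psum adj w S \<le> (sum w S)^2"
proof -
  have "psum adj w S \<le> (\<Sum>v\<in>S. w v * sum w S)"
    unfolding psum_def using assms dg_le[OF assms] by (intro sum_mono mult_left_mono) auto
  also have "\<dots> = (sum w S)^2" by (simp add: sum_distrib_right power2_eq_square)
  finally show ?thesis .
qed

lemma reduce:
  assumes sym: "\<forall>x y. adj x y \<longrightarrow> adj y x" and irr: "\<forall>x. \<not> adj x x"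
    and fin: "finite V" and wpos: "\<forall>v\<in>V. 0 < w v" and c0: "0 \<le> c" and eta: "0 < \<eta>"
    and big: "(c + \<eta>) * (sum w V)^2 \<le> psum adj w V" and Mpos: "0 < sum w V"
  shows "\<exists>S\<subseteq>V. S \<noteq> {} \<and> \<eta> * (sum w V)^2 \<le> (sum w S)^2 \<and> (\<forall>v\<in>S. c * (sum w S - w v / 2) \<le> dg adj w S v)"
proof -
  define \<Phi> where "\<Phi> S = psum adj w S - c * (sum w S)^2" for S
  define m where "m = Max (\<Phi> ` Pow V)"
  have finP: "finite (\<Phi> ` Pow V)" using fin by simp
  have "m \<in> \<Phi> ` Pow V" unfolding m_def using finP by (intro Max_in) auto
  then obtain S where S: "S \<subseteq> V" "\<Phi> S = m" by auto
  have maxS: "\<Phi> S' \<le> \<Phi> S" if "S' \<subseteq> V" for S'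
  proof -
    have "\<Phi> S' \<le> m" unfolding m_def using finP that by (intro Max_ge) auto
    then show ?thesis using S(2) by simp
  qed
  have finS: "finite S" using S fin finite_subset by blast
  have wS: "\<forall>u\<in>S. 0 \<le> w u" "\<forall>u\<in>S. 0 < w u" using S wpos by (auto simp: less_imp_le subset_iff)
  have "\<eta> * (sum w V)^2 \<le> \<Phi> V" unfolding \<Phi>_def using big by (simp add: algebra_simps)
  also have "\<dots> \<le> \<Phi> S" using maxS by simp
  also have "\<dots> \<le> psum adj w S" unfolding \<Phi>_def using c0 by simp
  also have "\<dots> \<le> (sum w S)^2" using psum_le[OF finS wS(1)] .
  finally have A: "\<eta> * (sum w V)^2 \<le> (sum w S)^2" .
  have B: "c * (sum w S - w v / 2) \<le> dg adj w S v" if v: "v \<in> S" for v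
  proof -
    have "\<Phi> (S - {v}) \<le> \<Phi> S" using maxS S by blast
    moreover have "sum w (S - {v}) = sum w S - w v" using finS v by (simp add: sum_diff1)
    ultimately have "psum adj w (S - {v}) - c * (sum w S - w v)^2 \<le> psum adj w (S - {v}) + 2 * w v * dg adj w S v - c * (sum w S)^2"
      unfolding \<Phi>_def using psum_remove[OF sym irr finS v] by simp
    then have "c * ((sum w S)^2 - (sum w S - w v)^2) \<le> 2 * w v * dg adj w S v"
      by (simp add: algebra_simps)
    moreover have "(sum w S)^2 - (sum w S - w v)^2 = 2 * w v * (sum w S - w v / 2)"
      by (simp add: power2_eq_square algebra_simps)
    ultimately have "2 * w v * (c * (sum w S - w v / 2)) \<le> 2 * w v * dg adj w S v"
      by (simp add: algebra_simps)
    then show ?thesis using wS(2) v by (simp add: mult_le_cancel_left_pos)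
  qed
  have Sne: "S \<noteq> {}"
  proof
    assume "S = {}"
    then have "\<eta> * (sum w V)^2 \<le> 0" using A by simp
    moreover have "0 < \<eta> * (sum w V)^2" using eta Mpos by simp
    ultimately show False by simp
  qed
  show ?thesis using S(1) Sne A B by blast
qed

lemma has_KK_mono:
  assumes "has_KK adj S k t" "S \<subseteq> V" shows "has_KK adj V k t"
proof -
  obtain P where P1: "\<forall>a<k. P a \<subseteq> S \<and> card (P a) = t \<and> finite (P a)"
    and P2: "\<forall>a<k. \<forall>b<k. a \<noteq> b \<longrightarrow> (\<forall>x\<in>P a. \<forall>y\<in>P b. adj x y)"
    using assms(1) unfolding has_KK_def by blast
  have "\<forall>a<k. P a \<subseteq> V \<and> card (P a) = t \<and> finite (P a)"
    using P1 assms(2) by (meson dual_order.trans)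
  then show ?thesis unfolding has_KK_def using P2 by (intro exI[of _ P]) simp
qed

lemma key:
  fixes r t :: nat and \<epsilon> :: real
  assumes r1: "r \<ge> 1" and eps: "0 < \<epsilon>" "\<epsilon> \<le> 1"
  shows "\<exists>\<theta>>0. \<forall>adj w V. (\<forall>x y. adj x y \<longrightarrow> adj y x) \<longrightarrow> (\<forall>x. \<not> adj x x) \<longrightarrow> finite V \<longrightarrow>
     (\<forall>v\<in>V. 0 < w v \<and> w v \<le> \<theta> * sum w V) \<longrightarrow> 0 < sum w V \<longrightarrow>
     (1 - 1 / real r + \<epsilon>) * (sum w V)^2 \<le> psum adj w V \<longrightarrow> has_KK adj V (Suc r) t"
proof -
  obtain \<theta>1 where th1: "\<theta>1 > 0" "ES_prop r t (\<epsilon> / 2) \<theta>1" using ES_exists[of "\<epsilon> / 2"] eps by auto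
  define \<eta> where "\<eta> = \<epsilon> / 4"
  define c where "c = 1 - 1 / real r + 3 * \<epsilon> / 4"
  have eta: "\<eta> > 0" unfolding \<eta>_def using eps by simp
  have rr: "1 / real r \<le> 1" using r1 by simp
  have rr0: "0 \<le> 1 / real r" by simp
  have c0: "0 \<le> c" unfolding c_def using rr eps by linarith
  have c2: "c \<le> 2" unfolding c_def using eps rr0 by linarith
  define \<theta> where "\<theta> = min \<theta>1 (\<epsilon> / 4) * sqrt \<eta>"
  have th0: "\<theta> > 0"
  proof -
    have "0 < min \<theta>1 (\<epsilon> / 4)" using th1 eps by simp
    moreover have "0 < sqrt \<eta>" using eta by simp
    ultimately show ?thesis unfolding \<theta>_def by (rule mult_pos_pos)
  qed
  show ?thesis
  proof (intro exI[of _ \<theta>] conjI allI impI th0)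
    fix adj w V
    assume sym: "\<forall>x y. adj x y \<longrightarrow> adj y x" and irr: "\<forall>x. \<not> adj x (x::nat)" and fin: "finite V"
      and wb: "\<forall>v\<in>V. 0 < w v \<and> w v \<le> \<theta> * sum w V" and Mpos: "0 < sum w V"
      and big: "(1 - 1 / real r + \<epsilon>) * (sum w V)^2 \<le> psum adj w V"
    have ceq: "c + \<eta> = 1 - 1 / real r + \<epsilon>" unfolding c_def \<eta>_def by linarith
    have big': "(c + \<eta>) * (sum w V)^2 \<le> psum adj w V" unfolding ceq by (rule big)
    have wpos: "\<forall>v\<in>V. 0 < w v" using wb by blast
    from reduce[OF sym irr fin wpos c0 eta big' Mpos]
    obtain S where S: "S \<subseteq> V" "S \<noteq> {}" "\<eta> * (sum w V)^2 \<le> (sum w S)^2"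
        "\<forall>v\<in>S. c * (sum w S - w v / 2) \<le> dg adj w S v"
      by blast
    have finS: "finite S" using S fin finite_subset by blast
    have wS: "\<And>v. v \<in> S \<Longrightarrow> 0 < w v \<and> w v \<le> \<theta> * sum w V" using wb S by blast
    have MS0: "0 \<le> sum w S" using wS by (intro sum_nonneg) (simp add: less_imp_le)
    have "sqrt (\<eta> * (sum w V)^2) \<le> sqrt ((sum w S)^2)" using S(3) by (rule real_sqrt_le_mono)
    moreover have "sqrt (\<eta> * (sum w V)^2) = sqrt \<eta> * sum w V" using Mpos by (simp add: real_sqrt_mult)
    moreover have "sqrt ((sum w S)^2) = sum w S" using MS0 by simp
    ultimately have MS: "sqrt \<eta> * sum w V \<le> sum w S" by simp
    have wS2: "w v \<le> min \<theta>1 (\<epsilon> / 4) * sum w S" if "v \<in> S" for v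
    proof -
      have "w v \<le> min \<theta>1 (\<epsilon> / 4) * (sqrt \<eta> * sum w V)" using wS[OF that] unfolding \<theta>_def by (simp add: mult.assoc)
      also have "\<dots> \<le> min \<theta>1 (\<epsilon> / 4) * sum w S" using MS th1 eps by (intro mult_left_mono) auto
      finally show ?thesis .
    qed
    have "has_KK adj S (Suc r) t"
    proof (rule ES_propD[OF th1(2) sym irr finS])
      show "\<forall>v\<in>S. 0 \<le> w v \<and> w v \<le> \<theta>1 * sum w S"
      proof
        fix v assume v: "v \<in> S"
        have "min \<theta>1 (\<epsilon> / 4) * sum w S \<le> \<theta>1 * sum w S" using MS0 by (intro mult_right_mono) auto
        then show "0 \<le> w v \<and> w v \<le> \<theta>1 * sum w S" using wS2[OF v] wS[OF v] by linarith
      qed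
      show "0 < sum w S"
      proof -
        obtain v where "v \<in> S" using S(2) by blast
        then have "0 < w v" using wS by blast
        moreover have "w v \<le> sum w S" using finS \<open>v \<in> S\<close> wS
          by (intro member_le_sum) (auto simp: less_imp_le)
        ultimately show ?thesis by linarith
      qed
      show "\<forall>v\<in>S. ((real r - 1) / real r + \<epsilon> / 2) * sum w S \<le> dg adj w S v"
      proof
        fix v assume v: "v \<in> S"
        have e1: "(real r - 1) / real r = 1 - 1 / real r" using r1 by (simp add: field_simps)
        have "w v \<le> \<epsilon> / 4 * sum w S"
        proof -
          have "min \<theta>1 (\<epsilon> / 4) * sum w S \<le> \<epsilon> / 4 * sum w S" using MS0 by (intro mult_right_mono) auto
          then show ?thesis using wS2[OF v] by linarith
        qed
        moreover have "c * (w v / 2) \<le> w v"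
        proof -
          have "c * (w v / 2) \<le> 2 * (w v / 2)" using c2 wS[OF v] by (intro mult_right_mono) auto
          then show ?thesis by simp
        qed
        moreover have "c * (sum w S - w v / 2) = c * sum w S - c * (w v / 2)" by (simp add: algebra_simps)
        moreover have "c * (sum w S - w v / 2) \<le> dg adj w S v" using S(4) v by blast
        ultimately have "c * sum w S - \<epsilon> / 4 * sum w S \<le> dg adj w S v" by linarith
        moreover have "c * sum w S - \<epsilon> / 4 * sum w S = ((real r - 1) / real r + \<epsilon> / 2) * sum w S"
          unfolding e1 c_def by (simp add: algebra_simps)
        ultimately show "((real r - 1) / real r + \<epsilon> / 2) * sum w S \<le> dg adj w S v" by simp
      qed
    qed
    then show "has_KK adj V (Suc r) t" using S(1) by (rule has_KK_mono)
  qed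
qed

definition adjE :: "nat set set \<Rightarrow> nat \<Rightarrow> nat \<Rightarrow> bool" where
  "adjE E i j \<longleftrightarrow> {i, j} \<in> E \<and> i \<noteq> j"

definition Dset :: "nat \<Rightarrow> nat set set \<Rightarrow> (nat \<times> nat) set" where
  "Dset n E = {(i, j). i \<in> {1..n} \<and> j \<in> {1..n} \<and> i < j \<and> {i, j} \<in> E}"

definition Pf :: "nat \<Rightarrow> nat set set \<Rightarrow> (nat \<Rightarrow> real) \<Rightarrow> real" where
  "Pf n E x = 2 * (\<Sum>(i, j)\<in>Dset n E. x i * x j)"

lemma psr_eq: "p_spectral_radius p n E = Sup {Pf n E x | x. (\<Sum>i\<in>{1..n}. \<bar>x i\<bar> powr p) = 1}"
  unfolding p_spectral_radius_def Pf_def Dset_def by simp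

lemma adjE_sym: "\<forall>x y. adjE E x y \<longrightarrow> adjE E y x"
  unfolding adjE_def by (simp add: insert_commute)

lemma adjE_irr: "\<forall>x. \<not> adjE E x x"
  unfolding adjE_def by simp

lemma finite_Dset: "finite (Dset n E)"
proof -
  have "Dset n E \<subseteq> {1..n} \<times> {1..n}" unfolding Dset_def by auto
  then show ?thesis by (rule finite_subset) simp
qed

lemma Pf_full: "Pf n E x = (\<Sum>i\<in>{1..n}. \<Sum>j\<in>{1..n}. if adjE E i j then x i * x j else 0)"
proof -
  define D where "D = Dset n E"
  define sw where "sw = (\<lambda>(i::nat, j::nat). (j, i))"
  define A where "A = {1..n} \<times> {1..n}"
  have finA: "finite A" unfolding A_def by simp
  have finD: "finite D" unfolding D_def by (rule finite_Dset)
  have eq: "{q \<in> A. adjE E (fst q) (snd q)} = D \<union> sw ` D"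
  proof (intro equalityI subsetI)
    fix q assume q: "q \<in> {q \<in> A. adjE E (fst q) (snd q)}"
    obtain i j where ij: "q = (i, j)" by (cases q)
    have h: "i \<in> {1..n}" "j \<in> {1..n}" "{i, j} \<in> E" "i \<noteq> j" using q ij unfolding A_def adjE_def by auto
    show "q \<in> D \<union> sw ` D"
    proof (cases "i < j")
      case True
      then show ?thesis using h ij unfolding D_def Dset_def by auto
    next
      case False
      then have "j < i" using h(4) by simp
      then have "(j, i) \<in> D" using h unfolding D_def Dset_def by (auto simp: insert_commute)
      then have "sw (j, i) \<in> sw ` D" by blast
      then show ?thesis using ij unfolding sw_def by simp
    qed
  next
    fix q assume q: "q \<in> D \<union> sw ` D"
    then show "q \<in> {q \<in> A. adjE E (fst q) (snd q)}"
      unfolding D_def Dset_def sw_def A_def adjE_def by (auto simp: insert_commute)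
  qed
  have disj: "D \<inter> sw ` D = {}" unfolding D_def Dset_def sw_def by auto
  have inj: "inj_on sw D" unfolding sw_def inj_on_def by auto
  have "(\<Sum>i\<in>{1..n}. \<Sum>j\<in>{1..n}. if adjE E i j then x i * x j else 0)
      = (\<Sum>q\<in>A. if adjE E (fst q) (snd q) then x (fst q) * x (snd q) else 0)"
    unfolding A_def by (simp add: sum.cartesian_product split_beta)
  also have "\<dots> = (\<Sum>q\<in>{q \<in> A. adjE E (fst q) (snd q)}. x (fst q) * x (snd q))"
    using finA by (simp add: sum.inter_filter)
  also have "\<dots> = (\<Sum>q\<in>D. x (fst q) * x (snd q)) + (\<Sum>q\<in>sw ` D. x (fst q) * x (snd q))"
    unfolding eq using finD disj by (intro sum.union_disjoint) auto
  also have "(\<Sum>q\<in>sw ` D. x (fst q) * x (snd q)) = (\<Sum>q\<in>D. x (fst q) * x (snd q))"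
    using inj by (subst sum.reindex) (auto simp: sw_def split_beta mult.commute intro!: sum.cong)
  finally show ?thesis unfolding Pf_def D_def by (simp add: split_beta)
qed

lemma Pf_abs: "Pf n E x \<le> Pf n E (\<lambda>i. \<bar>x i\<bar>)"
  unfolding Pf_def
proof (intro mult_left_mono sum_mono)
  fix q assume "q \<in> Dset n E"
  show "(case q of (i, j) \<Rightarrow> x i * x j) \<le> (case q of (i, j) \<Rightarrow> \<bar>x i\<bar> * \<bar>x j\<bar>)"
    by (cases q) (simp add: abs_mult[symmetric])
qed simp

lemma Pf_psum:
  fixes y :: "nat \<Rightarrow> real"
  assumes nn: "\<forall>i. 0 \<le> y i"
  shows "Pf n E y = psum (adjE E) y {i \<in> {1..n}. 0 < y i}"
proof -
  define V where "V = {i \<in> {1..n}. 0 < y i}"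
  have VS: "V \<subseteq> {1..n}" unfolding V_def by auto
  have z: "y i = 0" if "i \<in> {1..n} - V" for i using that nn unfolding V_def by (auto simp: less_le)
  have dgV: "dg (adjE E) y {1..n} i = dg (adjE E) y V i" for i
    unfolding dg_def using VS z by (intro sum.mono_neutral_right) auto
  have "Pf n E y = (\<Sum>i\<in>{1..n}. y i * dg (adjE E) y {1..n} i)"
    unfolding Pf_full dg_def sum_distrib_left by (intro sum.cong refl) simp
  also have "\<dots> = (\<Sum>i\<in>{1..n}. y i * dg (adjE E) y V i)" using dgV by simp
  also have "\<dots> = (\<Sum>i\<in>V. y i * dg (adjE E) y V i)"
    using VS z by (intro sum.mono_neutral_right) auto
  finally show ?thesis unfolding psum_def V_def .
qed

lemma sum_V:
  fixes y :: "nat \<Rightarrow> real"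
  assumes nn: "\<forall>i. 0 \<le> y i"
  shows "sum y {1..n} = sum y {i \<in> {1..n}. 0 < y i}"
  using nn by (intro sum.mono_neutral_right) (auto simp: less_le)

lemma y_le_1:
  fixes y :: "nat \<Rightarrow> real"
  assumes p: "p > 0" and nn: "\<forall>i. 0 \<le> y i" and s: "(\<Sum>i\<in>{1..n}. y i powr p) = 1" and i: "i \<in> {1..n}"
  shows "y i \<le> 1"
proof -
  have "y i powr p \<le> 1" using s i member_le_sum[where f="\<lambda>i. y i powr p" and i=i and A="{1..n}"] by simp
  then have "(y i powr p) powr (1 / p) \<le> 1 powr (1 / p)" using p by (intro powr_mono2) auto
  then show ?thesis using p nn by (simp add: powr_powr)
qed

lemma holder:
  fixes y :: "nat \<Rightarrow> real"
  assumes p: "p > 1" and nn: "\<forall>i. 0 \<le> y i" and s: "(\<Sum>i\<in>{1..n}. y i powr p) = 1" and n: "n \<ge> 1"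
  shows "sum y {1..n} \<le> real n powr (1 - 1 / p)"
proof -
  define q where "q = p / (p - 1)"
  have q1: "q > 1" unfolding q_def using p by (simp add: field_simps)
  have pq: "1 / p + 1 / q = 1" unfolding q_def using p by (simp add: field_simps)
  define L where "L = real n powr ((1 - 1 / p) / p)"
  have npos: "real n > 0" using n by simp
  have Lpos: "L > 0" unfolding L_def using npos by simp
  have Lp: "L powr p = real n powr (1 - 1 / p)" unfolding L_def using p npos by (simp add: powr_powr)
  have Lq: "(1 / L) powr q = real n powr (- 1 / p)"
  proof -
    have "(1 / L) powr q = L powr (- q)" using Lpos by (simp add: powr_minus_divide powr_divide)
    also have "\<dots> = real n powr ((1 - 1 / p) / p * (- q))" unfolding L_def by (simp add: powr_powr)
    also have "(1 - 1 / p) / p * (- q) = - 1 / p" unfolding q_def using p by (simp add: field_simps)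
    finally show ?thesis .
  qed
  have Y: "y i \<le> y i powr p * real n powr (1 - 1 / p) / p + real n powr (- 1 / p) / q" for i
  proof -
    have "y i = (y i * L) * (1 / L)" using Lpos by simp
    also have "\<dots> \<le> (y i * L) powr p / p + (1 / L) powr q / q"
      using Youngs_inequality[OF p q1 pq, of "y i * L" "1 / L"] nn Lpos by simp
    also have "(y i * L) powr p = y i powr p * L powr p" using nn Lpos by (simp add: powr_mult)
    finally show ?thesis unfolding Lp Lq by simp
  qed
  have "sum y {1..n} \<le> (\<Sum>i\<in>{1..n}. y i powr p * real n powr (1 - 1 / p) / p + real n powr (- 1 / p) / q)"
    using Y by (intro sum_mono) auto
  also have "\<dots> = (\<Sum>i\<in>{1..n}. y i powr p) * real n powr (1 - 1 / p) / p + real n * (real n powr (- 1 / p) / q)"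
    by (simp add: sum.distrib sum_divide_distrib sum_distrib_right)
  also have "\<dots> = real n powr (1 - 1 / p) / p + real n * real n powr (- 1 / p) / q"
    unfolding s by simp
  also have "real n * real n powr (- 1 / p) = real n powr (1 - 1 / p)"
  proof -
    have "real n powr (1 + (- 1 / p)) = real n powr 1 * real n powr (- 1 / p)" by (rule powr_add)
    moreover have "1 + (- 1 / p) = 1 - 1 / p" by simp
    ultimately show ?thesis using npos by simp
  qed
  also have "real n powr (1 - 1 / p) / p + real n powr (1 - 1 / p) / q = real n powr (1 - 1 / p) * (1 / p + 1 / q)"
    by (simp add: algebra_simps)
  finally show ?thesis unfolding pq by simp
qed

lemma colouring_facts:
  assumes "chromatic_number m EF = r + 1"
  shows "\<exists>c. proper_colouring m EF (r + 1) c" and "\<not> (\<exists>c. proper_colouring m EF r c)"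
proof -
  have ex: "\<exists>k c. proper_colouring m EF k c"
    by (rule exI[of _ "m + 1"], rule exI[of _ id]) (auto simp: proper_colouring_def)
  show "\<exists>c. proper_colouring m EF (r + 1) c"
    using LeastI_ex[OF ex] assms unfolding chromatic_number_def by simp
  show "\<not> (\<exists>c. proper_colouring m EF r c)"
    using not_less_Least[of r "\<lambda>k. \<exists>c. proper_colouring m EF k c"] assms
    unfolding chromatic_number_def by simp
qed

lemma KK_contains:
  assumes KK: "has_KK (adjE E) V (Suc r) m" and VS: "V \<subseteq> {1..n}"
    and col: "proper_colouring m EF (r + 1) c" and gF: "graph_on m EF"
  shows "contains_subgraph n E m EF"
proof -
  obtain P where P1: "\<forall>a<Suc r. P a \<subseteq> V \<and> card (P a) = m \<and> finite (P a)"
    and P2: "\<forall>a<Suc r. \<forall>b<Suc r. a \<noteq> b \<longrightarrow> (\<forall>x\<in>P a. \<forall>y\<in>P b. adjE E x y)"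
    using KK unfolding has_KK_def by blast
  have "\<forall>a. \<exists>h. a < Suc r \<longrightarrow> bij_betw h {1..m} (P a)"
  proof
    fix a show "\<exists>h. a < Suc r \<longrightarrow> bij_betw h {1..m} (P a)"
    proof (cases "a < Suc r")
      case True
      then show ?thesis using ex_bij_betw_nat_finite_1[of "P a"] P1 by auto
    qed auto
  qed
  from choice[OF this] obtain H where H: "\<And>a. a < Suc r \<Longrightarrow> bij_betw (H a) {1..m} (P a)" by blast
  have ci: "c i < Suc r" if "i \<in> {1..m}" for i using col that unfolding proper_colouring_def by auto
  define f where "f i = H (c i) i" for i
  have fi: "f i \<in> P (c i)" if "i \<in> {1..m}" for i
    using H[OF ci[OF that]] that unfolding f_def by (auto dest: bij_betwE)
  have fadj: "adjE E (f i) (f j)" if "i \<in> {1..m}" "j \<in> {1..m}" "c i \<noteq> c j" for i j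
    using P2[rule_format, OF ci[OF that(1)] ci[OF that(2)] that(3) fi[OF that(1)] fi[OF that(2)]] .
  show ?thesis
    unfolding contains_subgraph_def
  proof (intro exI[of _ f] conjI)
    show "f ` {1..m} \<subseteq> {1..n}"
    proof (rule image_subsetI)
      fix i assume i: "i \<in> {1..m}"
      have "P (c i) \<subseteq> V" using P1 ci[OF i] by simp
      then show "f i \<in> {1..n}" using fi[OF i] VS by blast
    qed
    show "inj_on f {1..m}"
    proof (rule inj_onI)
      fix i j assume i: "i \<in> {1..m}" and j: "j \<in> {1..m}" and eq: "f i = f j"
      show "i = j"
      proof (cases "c i = c j")
        case True
        have "H (c i) i = H (c i) j" using eq True unfolding f_def by simp
        then show ?thesis using H[OF ci[OF i]] i j unfolding bij_betw_def inj_on_def by blast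
      next
        case False
        then have "adjE E (f i) (f j)" using fadj i j by blast
        then show ?thesis using eq adjE_irr by metis
      qed
    qed
    show "\<forall>e\<in>EF. f ` e \<in> E"
    proof
      fix e assume e: "e \<in> EF"
      then obtain i j where ij: "e = {i, j}" "i \<noteq> j" "i \<in> {1..m}" "j \<in> {1..m}"
        using gF unfolding graph_on_def by blast
      have "{i, j} \<in> EF" using e ij by simp
      then have "c i \<noteq> c j" using col ij unfolding proper_colouring_def by auto
      then have "adjE E (f i) (f j)" using fadj ij by blast
      then show "f ` e \<in> E" using ij unfolding adjE_def by simp
    qed
  qed
qed

lemma turan_adj:
  assumes "i \<in> {1..n}" "j \<in> {1..n}"
  shows "adjE (turan_graph r n) i j \<longleftrightarrow> i mod r \<noteq> j mod r"
proof
  assume "adjE (turan_graph r n) i j"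
  then obtain a b where "{i, j} = {a, b}" "a mod r \<noteq> b mod r"
    unfolding adjE_def turan_graph_def by blast
  then show "i mod r \<noteq> j mod r" by (auto simp: doubleton_eq_iff)
next
  assume "i mod r \<noteq> j mod r"
  then show "adjE (turan_graph r n) i j"
    using assms unfolding adjE_def turan_graph_def by auto
qed

lemma turan_graph_on: "graph_on n (turan_graph r n)"
  unfolding graph_on_def turan_graph_def by auto

lemma turan_free:
  assumes r1: "r \<ge> 1" and nc: "\<not> (\<exists>c. proper_colouring m EF r c)"
  shows "\<not> contains_subgraph n (turan_graph r n) m EF"
proof
  assume "contains_subgraph n (turan_graph r n) m EF"
  then obtain f where f: "\<forall>e\<in>EF. f ` e \<in> turan_graph r n" unfolding contains_subgraph_def by blast
  have "proper_colouring m EF r (\<lambda>i. f i mod r)"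
    unfolding proper_colouring_def
  proof (intro conjI ballI impI)
    fix i show "f i mod r < r" using r1 by simp
  next
    fix i j assume "i \<in> {1..m}" "j \<in> {1..m}" "{i, j} \<in> EF" "i \<noteq> j"
    then have "f ` {i, j} \<in> turan_graph r n" using f by blast
    then have "{f i, f j} \<in> turan_graph r n" by simp
    then obtain a b where "{f i, f j} = {a, b}" "a mod r \<noteq> b mod r"
      unfolding turan_graph_def by blast
    then show "f i mod r \<noteq> f j mod r" by (auto simp: doubleton_eq_iff)
  qed
  then show False using nc by blast
qed

lemma Pf_bound:
  assumes p: "p > 0" and x: "(\<Sum>i\<in>{1..n}. \<bar>x i\<bar> powr p) = 1"
  shows "Pf n E x \<le> 2 * real (card (Dset n E))"
proof -
  have le1: "\<bar>x i\<bar> \<le> 1" if "i \<in> {1..n}" for i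
    using y_le_1[of p "\<lambda>i. \<bar>x i\<bar>" n i] p x that by simp
  have "Pf n E x \<le> Pf n E (\<lambda>i. \<bar>x i\<bar>)" by (rule Pf_abs)
  also have "\<dots> \<le> 2 * (\<Sum>q\<in>Dset n E. 1)"
    unfolding Pf_def
  proof (intro mult_left_mono sum_mono)
    fix q assume q: "q \<in> Dset n E"
    obtain i j where ij: "q = (i, j)" by (cases q)
    have "i \<in> {1..n}" "j \<in> {1..n}" using q ij unfolding Dset_def by auto
    then have "\<bar>x i\<bar> * \<bar>x j\<bar> \<le> 1 * 1" using le1 by (intro mult_mono) auto
    then show "(case q of (i, j) \<Rightarrow> \<bar>x i\<bar> * \<bar>x j\<bar>) \<le> 1" using ij by simp
  qed simp
  finally show ?thesis by simp
qed

lemma psr_ge: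
  assumes p: "p > 0" and x: "(\<Sum>i\<in>{1..n}. \<bar>x i\<bar> powr p) = 1"
  shows "Pf n E x \<le> p_spectral_radius p n E"
  unfolding psr_eq
proof (rule cSup_upper)
  show "Pf n E x \<in> {Pf n E x |x. (\<Sum>i\<in>{1..n}. \<bar>x i\<bar> powr p) = 1}" using x by blast
  show "bdd_above {Pf n E x |x. (\<Sum>i\<in>{1..n}. \<bar>x i\<bar> powr p) = 1}"
    unfolding bdd_above_def using Pf_bound[OF p] by blast
qed

lemma psr_le:
  assumes p: "p > 0" and n: "n \<ge> 1"
    and B: "\<And>x. (\<Sum>i\<in>{1..n}. \<bar>x i\<bar> powr p) = 1 \<Longrightarrow> Pf n E x \<le> B"
  shows "p_spectral_radius p n E \<le> B"
  unfolding psr_eq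
proof (rule cSup_least)
  define x0 :: "nat \<Rightarrow> real" where "x0 i = (if i = 1 then 1 else 0)" for i
  have "(\<Sum>i\<in>{1..n}. \<bar>x0 i\<bar> powr p) = (\<Sum>i\<in>{1..n}. if i = 1 then 1 else 0)"
    unfolding x0_def by (intro sum.cong refl) auto
  also have "\<dots> = 1" using n by simp
  finally show "{Pf n E x |x. (\<Sum>i\<in>{1..n}. \<bar>x i\<bar> powr p) = 1} \<noteq> {}" by blast
  show "\<And>z. z \<in> {Pf n E x |x. (\<Sum>i\<in>{1..n}. \<bar>x i\<bar> powr p) = 1} \<Longrightarrow> z \<le> B"
    using B by blast
qed

definition Yset :: "real \<Rightarrow> nat \<Rightarrow> nat \<Rightarrow> nat set set \<Rightarrow> real set" where
  "Yset p n m EF = {p_spectral_radius p n E | E. graph_on n E \<and> \<not> contains_subgraph n E m EF}"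

lemma Yset_finite: "finite (Yset p n m EF)"
proof -
  have "Yset p n m EF \<subseteq> (\<lambda>E. p_spectral_radius p n E) ` Pow (Pow {1..n})"
  proof
    fix z assume "z \<in> Yset p n m EF"
    then obtain E where E: "z = p_spectral_radius p n E" "graph_on n E" unfolding Yset_def by blast
    have "E \<subseteq> Pow {1..n}" using E(2) unfolding graph_on_def by auto
    then show "z \<in> (\<lambda>E. p_spectral_radius p n E) ` Pow (Pow {1..n})" using E(1) by blast
  qed
  then show ?thesis by (rule finite_subset) simp
qed

lemma ex_ge:
  assumes "graph_on n E" "\<not> contains_subgraph n E m EF"
  shows "p_spectral_radius p n E \<le> spectral_ex p n m EF"
proof -
  have "p_spectral_radius p n E \<in> Yset p n m EF" using assms unfolding Yset_def by blast
  then show ?thesis unfolding spectral_ex_def Yset_def[symmetric]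
    using Yset_finite by (intro cSup_upper) (auto intro: bdd_above_finite)
qed

lemma ex_le:
  assumes "graph_on n E0" "\<not> contains_subgraph n E0 m EF"
    and B: "\<And>E. graph_on n E \<Longrightarrow> \<not> contains_subgraph n E m EF \<Longrightarrow> p_spectral_radius p n E \<le> B"
  shows "spectral_ex p n m EF \<le> B"
proof -
  have "p_spectral_radius p n E0 \<in> Yset p n m EF" using assms unfolding Yset_def by blast
  then show ?thesis unfolding spectral_ex_def Yset_def[symmetric]
    by (intro cSup_least) (auto simp: Yset_def intro: B)
qed

lemma ev_powr:
  assumes a: "a > 0"
  shows "eventually (\<lambda>n. K \<le> real n powr a) at_top"
proof -
  define N where "N = nat \<lceil>\<bar>K\<bar> powr (1 / a)\<rceil>"
  show ?thesis using eventually_ge_at_top[of N]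
  proof (rule eventually_mono)
    fix n assume n: "N \<le> n"
    have "\<bar>K\<bar> powr (1 / a) \<le> real n" using n unfolding N_def by linarith
    then have "(\<bar>K\<bar> powr (1 / a)) powr a \<le> real n powr a" using a by (intro powr_mono2) auto
    moreover have "(\<bar>K\<bar> powr (1 / a)) powr a = \<bar>K\<bar> \<or> K = 0" using a by (auto simp: powr_powr)
    ultimately show "K \<le> real n powr a" by auto
  qed
qed

lemma powr_sq: "(real n powr (1 - 1 / p))^2 = real n powr (2 - 2 / p)"
proof -
  have "(real n powr (1 - 1 / p))^2 = real n powr (1 - 1 / p) * real n powr (1 - 1 / p)"
    by (simp add: power2_eq_square)
  also have "\<dots> = real n powr ((1 - 1 / p) + (1 - 1 / p))" by (rule powr_add[symmetric])
  also have "(1 - 1 / p) + (1 - 1 / p) = 2 - 2 / p" by simp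
  finally show ?thesis .
qed

lemma spec_upper:
  assumes r1: "r \<ge> 1" and p: "p > 1" and eps: "0 < \<epsilon>" "\<epsilon> \<le> 1"
    and col: "proper_colouring m EF (r + 1) c" and gF: "graph_on m EF"
  shows "eventually (\<lambda>n. \<forall>E. graph_on n E \<and> \<not> contains_subgraph n E m EF \<longrightarrow>
            p_spectral_radius p n E \<le> (1 - 1 / real r + \<epsilon>) * real n powr (2 - 2 / p)) at_top"
proof -
  obtain \<theta> where th: "\<theta> > 0" and K: "\<And>adj w V. (\<forall>x y. adj x y \<longrightarrow> adj y x) \<Longrightarrow> (\<forall>x. \<not> adj x x) \<Longrightarrow> finite V \<Longrightarrow>
     (\<forall>v\<in>V. 0 < w v \<and> w v \<le> \<theta> * sum w V) \<Longrightarrow> 0 < sum w V \<Longrightarrow>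
     (1 - 1 / real r + \<epsilon>) * (sum w V)^2 \<le> psum adj w V \<Longrightarrow> has_KK adj V (Suc r) m"
    using key[OF r1 eps, of m] by blast
  define K0 where "K0 = 1 / (\<theta> * sqrt \<epsilon>)"
  have a0: "1 - 1 / p > 0" using p by simp
  have ev: "eventually (\<lambda>n. K0 \<le> real n powr (1 - 1 / p) \<and> n \<ge> 1) at_top"
    using ev_powr[OF a0, of K0] eventually_ge_at_top[of 1] by (rule eventually_conj)
  show ?thesis using ev
  proof (rule eventually_mono)
    fix n :: nat assume n: "K0 \<le> real n powr (1 - 1 / p) \<and> n \<ge> 1"
    define N1 where "N1 = real n powr (1 - 1 / p)"
    define N where "N = real n powr (2 - 2 / p)"
    have NN: "N = N1^2" unfolding N_def N1_def by (simp add: powr_sq)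
    have N1pos: "N1 > 0" unfolding N1_def using n by simp
    have r0: "0 \<le> 1 - 1 / real r" using r1 by simp
    define \<rho> where "\<rho> = 1 - 1 / real r + \<epsilon>"
    have rho: "\<epsilon> \<le> \<rho>" unfolding \<rho>_def using r0 by simp
    show "\<forall>E. graph_on n E \<and> \<not> contains_subgraph n E m EF \<longrightarrow>
            p_spectral_radius p n E \<le> (1 - 1 / real r + \<epsilon>) * real n powr (2 - 2 / p)"
    proof (intro allI impI)
      fix E assume E: "graph_on n E \<and> \<not> contains_subgraph n E m EF"
      show "p_spectral_radius p n E \<le> (1 - 1 / real r + \<epsilon>) * real n powr (2 - 2 / p)"
      proof (rule psr_le)
        show "p > 0" "n \<ge> 1" using p n by auto
        fix x :: "nat \<Rightarrow> real" assume x: "(\<Sum>i\<in>{1..n}. \<bar>x i\<bar> powr p) = 1"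
        show "Pf n E x \<le> (1 - 1 / real r + \<epsilon>) * real n powr (2 - 2 / p)"
        proof (rule ccontr)
          assume "\<not> ?thesis"
          then have gt: "\<rho> * N < Pf n E x" unfolding \<rho>_def N_def by simp
          define y where "y i = \<bar>x i\<bar>" for i
          define V where "V = {i \<in> {1..n}. 0 < y i}"
          define M where "M = sum y V"
          have nn: "\<forall>i. 0 \<le> y i" unfolding y_def by simp
          have s: "(\<Sum>i\<in>{1..n}. y i powr p) = 1" unfolding y_def using x .
          have finV: "finite V" unfolding V_def by simp
          have Pfy: "Pf n E x \<le> psum (adjE E) y V"
            using Pf_abs[of n E x] Pf_psum[OF nn, of n E] unfolding y_def V_def by simp
          have MM: "M = sum y {1..n}" unfolding M_def V_def using sum_V[OF nn] by simp
          have Mle: "M \<le> N1" unfolding MM N1_def using holder[OF p nn s] n by simp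
          have M0: "0 \<le> M" unfolding M_def using nn by (simp add: sum_nonneg)
          have M2: "M^2 \<le> N" unfolding NN using Mle M0 by (intro power_mono) auto
          have pl: "psum (adjE E) y V \<le> M^2" unfolding M_def using psum_le[OF finV] nn by simp
          have Npos: "N > 0" unfolding NN using N1pos by simp
          have rpos: "\<rho> > 0" using rho eps by simp
          have big: "\<rho> * M^2 \<le> psum (adjE E) y V"
          proof -
            have "\<rho> * M^2 \<le> \<rho> * N" using M2 rpos by (intro mult_left_mono) auto
            then show ?thesis using gt Pfy by linarith
          qed
          have "\<epsilon> * N \<le> \<rho> * N" using rho Npos by (intro mult_right_mono) auto
          then have "\<epsilon> * N \<le> M^2" using gt Pfy pl by linarith
          then have eM: "\<epsilon> * N1^2 \<le> M^2" unfolding NN .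
          have "sqrt (\<epsilon> * N1^2) \<le> sqrt (M^2)" using eM by (rule real_sqrt_le_mono)
          moreover have "sqrt (\<epsilon> * N1^2) = sqrt \<epsilon> * N1" using N1pos by (simp add: real_sqrt_mult)
          moreover have "sqrt (M^2) = M" using M0 by simp
          ultimately have MN: "sqrt \<epsilon> * N1 \<le> M" by simp
          have Mpos: "0 < M"
          proof -
            have "0 < sqrt \<epsilon> * N1" using eps N1pos by simp
            then show ?thesis using MN by linarith
          qed
          have one: "1 \<le> \<theta> * M"
          proof -
            have "K0 \<le> N1" using n unfolding N1_def by simp
            then have "\<theta> * sqrt \<epsilon> * K0 \<le> \<theta> * sqrt \<epsilon> * N1" using th eps by (intro mult_left_mono) auto
            moreover have "\<theta> * sqrt \<epsilon> * K0 = 1" unfolding K0_def using th eps by simp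
            moreover have "\<theta> * sqrt \<epsilon> * N1 \<le> \<theta> * M" using MN th by (simp add: mult.assoc mult_left_mono)
            ultimately show ?thesis by linarith
          qed
          have wb: "\<forall>v\<in>V. 0 < y v \<and> y v \<le> \<theta> * sum y V"
          proof
            fix v assume v: "v \<in> V"
            then have "y v \<le> 1" using y_le_1[of p y n v] p nn s unfolding V_def by simp
            then show "0 < y v \<and> y v \<le> \<theta> * sum y V" using v one unfolding V_def M_def by auto
          qed
          have "has_KK (adjE E) V (Suc r) m"
            using K[OF adjE_sym adjE_irr finV wb] Mpos big unfolding M_def \<rho>_def by simp
          then have "contains_subgraph n E m EF"
            using KK_contains[OF _ _ col gF] unfolding V_def by blast
          then show False using E by blast
        qed
      qed
    qed
  qed
qed

lemma cnt_mod:
  assumes r1: "r \<ge> 1"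
  shows "card {j \<in> {1..n}. j mod r = k} \<le> n div r + 1"
proof -
  define A where "A = {j \<in> {1..n}. j mod r = k}"
  have inj: "inj_on (\<lambda>j. j div r) A"
  proof (rule inj_onI)
    fix a b assume a: "a \<in> A" and b: "b \<in> A" and eq: "a div r = b div r"
    have "a = a div r * r + a mod r" by simp
    also have "\<dots> = b div r * r + b mod r" using a b eq unfolding A_def by simp
    also have "\<dots> = b" by simp
    finally show "a = b" .
  qed
  have sub: "(\<lambda>j. j div r) ` A \<subseteq> {0..n div r}"
    unfolding A_def by (auto intro: div_le_mono)
  have "card A \<le> card {0..n div r}" using card_inj_on_le[OF inj sub] by simp
  then show ?thesis unfolding A_def by simp
qed

lemma row_count:
  assumes r1: "r \<ge> 1" and i: "i \<in> {1..n}"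
  shows "real n - real n / real r - 1 \<le> (\<Sum>j\<in>{1..n}. if adjE (turan_graph r n) i j then 1 else 0)"
proof -
  have "(\<Sum>j\<in>{1..n}. if adjE (turan_graph r n) i j then 1 else (0::real))
      = (\<Sum>j\<in>{1..n}. 1 - (if j mod r = i mod r then 1 else 0))"
    using turan_adj[OF i] by (intro sum.cong refl) auto
  also have "\<dots> = real n - (\<Sum>j\<in>{1..n}. if j mod r = i mod r then 1 else 0)"
    by (simp add: sum_subtractf)
  also have "(\<Sum>j\<in>{1..n}. if j mod r = i mod r then 1 else (0::real)) = real (card {j \<in> {1..n}. j mod r = i mod r})"
    by (simp add: sum.inter_filter[symmetric])
  finally have eq: "(\<Sum>j\<in>{1..n}. if adjE (turan_graph r n) i j then 1 else (0::real))
      = real n - real (card {j \<in> {1..n}. j mod r = i mod r})" .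
  have c: "card {j \<in> {1..n}. j mod r = i mod r} \<le> n div r + 1" by (rule cnt_mod[OF r1])
  have "real (n div r) * real r \<le> real n"
  proof -
    have "n div r * r \<le> n" by (rule div_times_less_eq_dividend)
    then have "real (n div r * r) \<le> real n" by (simp only: of_nat_le_iff)
    then show ?thesis by simp
  qed
  then have "real (n div r) \<le> real n / real r" using r1 by (simp add: field_simps)
  moreover have "real (card {j \<in> {1..n}. j mod r = i mod r}) \<le> real (n div r) + 1"
    using c by (metis of_nat_1 of_nat_add of_nat_le_iff)
  ultimately show ?thesis unfolding eq by linarith
qed

lemma turan_lower:
  assumes r1: "r \<ge> 1" and p: "p > 0" and n: "n \<ge> 1"
  shows "(1 - 1 / real r) * real n powr (2 - 2 / p) - real n powr (2 - 2 / p) / real n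
          \<le> p_spectral_radius p n (turan_graph r n)"
proof -
  define c0 where "c0 = real n powr (- 1 / p)"
  define x where "x i = c0" for i :: nat
  have npos: "real n > 0" using n by simp
  have c0pos: "c0 > 0" unfolding c0_def using npos by simp
  have "(\<Sum>i\<in>{1..n}. \<bar>x i\<bar> powr p) = real n * c0 powr p" unfolding x_def using c0pos by simp
  also have "c0 powr p = real n powr (- 1)" unfolding c0_def using p by (simp add: powr_powr)
  also have "real n * real n powr (- 1) = 1" using npos by (simp add: powr_minus)
  finally have xs: "(\<Sum>i\<in>{1..n}. \<bar>x i\<bar> powr p) = 1" .
  have c2: "c0^2 = real n powr (- 2 / p)"
    unfolding c0_def using npos by (simp add: powr_power)
  have N: "real n powr (2 - 2 / p) = real n ^ 2 * c0^2"
  proof -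
    have "real n powr (2 + (- 2 / p)) = real n powr 2 * real n powr (- 2 / p)" by (rule powr_add)
    moreover have "real n powr 2 = real n ^ 2" using powr_realpow[OF npos, of 2] by simp
    moreover have "2 + (- 2 / p) = 2 - 2 / p" by simp
    ultimately show ?thesis unfolding c2 by simp
  qed
  have "Pf n (turan_graph r n) x = (\<Sum>i\<in>{1..n}. c0^2 * (\<Sum>j\<in>{1..n}. if adjE (turan_graph r n) i j then 1 else 0))"
    unfolding Pf_full x_def sum_distrib_left by (intro sum.cong refl) (simp add: power2_eq_square)
  also have "\<dots> \<ge> (\<Sum>i\<in>{1..n}. c0^2 * (real n - real n / real r - 1))"
    using row_count[OF r1] c0pos by (intro sum_mono mult_left_mono) auto
  finally have "real n * (c0^2 * (real n - real n / real r - 1)) \<le> Pf n (turan_graph r n) x" by simp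
  moreover have "real n * (c0^2 * (real n - real n / real r - 1))
      = (1 - 1 / real r) * real n powr (2 - 2 / p) - real n powr (2 - 2 / p) / real n"
    unfolding N using npos r1 by (simp add: field_simps power2_eq_square)
  ultimately have "(1 - 1 / real r) * real n powr (2 - 2 / p) - real n powr (2 - 2 / p) / real n
      \<le> Pf n (turan_graph r n) x" by simp
  also have "\<dots> \<le> p_spectral_radius p n (turan_graph r n)" by (rule psr_ge[OF p xs])
  finally show ?thesis .
qed

theorem theorem3p10:
  fixes r m :: nat and EF :: "nat set set" and p :: real
  assumes "r \<ge> 1"
    and "graph_on m EF"
    and "chromatic_number m EF = r + 1"
    and "p > 1"
  shows "((\<lambda>n. spectral_ex p n m EF - p_spectral_radius p n (turan_graph r n))
           \<in> o[at_top](\<lambda>n. real n powr (2 - 2 / p)))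
         \<and> ((\<lambda>n. spectral_ex p n m EF / real n powr (2 - 2 / p)) \<longlongrightarrow> 1 - 1 / real r) at_top"
proof -
  have r1: "r \<ge> 1" and gF: "graph_on m EF" and p: "p > 1" using assms by auto
  obtain c where col: "proper_colouring m EF (r + 1) c" using colouring_facts(1)[OF assms(3)] by blast
  have nc: "\<not> (\<exists>c. proper_colouring m EF r c)" using colouring_facts(2)[OF assms(3)] .
  define N where "N n = real n powr (2 - 2 / p)" for n :: nat
  define X where "X n = spectral_ex p n m EF" for n
  define Tn where "Tn n = p_spectral_radius p n (turan_graph r n)" for n
  have main: "eventually (\<lambda>n. (1 - 1 / real r - \<epsilon>) * N n \<le> Tn n \<and> Tn n \<le> X n
      \<and> X n \<le> (1 - 1 / real r + \<epsilon>) * N n \<and> 0 < N n) at_top"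
    if eps: "0 < \<epsilon>" "\<epsilon> \<le> 1" for \<epsilon>
  proof -
    note ev1 = spec_upper[OF r1 p eps col gF]
    have ev2: "eventually (\<lambda>n. n \<ge> max 1 (nat \<lceil>1 / \<epsilon>\<rceil>)) at_top" by (rule eventually_ge_at_top)
    show ?thesis using eventually_conj[OF ev1 ev2]
    proof (rule eventually_mono)
      fix n assume H: "(\<forall>E. graph_on n E \<and> \<not> contains_subgraph n E m EF \<longrightarrow>
            p_spectral_radius p n E \<le> (1 - 1 / real r + \<epsilon>) * real n powr (2 - 2 / p)) \<and> max 1 (nat \<lceil>1 / \<epsilon>\<rceil>) \<le> n"
      have n1: "n \<ge> 1" using H by simp
      have ne: "1 / \<epsilon> \<le> real n" using H by linarith
      have npos: "real n > 0" using n1 by simp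
      have Npos: "0 < N n" unfolding N_def using npos by simp
      have free: "\<not> contains_subgraph n (turan_graph r n) m EF" by (rule turan_free[OF r1 nc])
      have low: "(1 - 1 / real r) * N n - N n / real n \<le> Tn n"
        unfolding N_def Tn_def using turan_lower[OF r1 _ n1] p by simp
      have "1 / real n \<le> \<epsilon>" using ne eps npos by (simp add: field_simps)
      then have "N n * (1 / real n) \<le> N n * \<epsilon>" using Npos by (intro mult_left_mono) auto
      then have "N n / real n \<le> \<epsilon> * N n" by (simp add: mult.commute)
      then have A: "(1 - 1 / real r - \<epsilon>) * N n \<le> Tn n" using low by (simp add: algebra_simps)
      have B: "Tn n \<le> X n" unfolding Tn_def X_def by (rule ex_ge[OF turan_graph_on free])
      have C: "X n \<le> (1 - 1 / real r + \<epsilon>) * N n"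
        unfolding X_def N_def by (rule ex_le[OF turan_graph_on free]) (use H in blast)
      show "(1 - 1 / real r - \<epsilon>) * N n \<le> Tn n \<and> Tn n \<le> X n \<and> X n \<le> (1 - 1 / real r + \<epsilon>) * N n \<and> 0 < N n"
        using A B C Npos by simp
    qed
  qed
  have part1: "(\<lambda>n. X n - Tn n) \<in> o[at_top](N)"
  proof (rule landau_o.smallI)
    fix c :: real assume c: "c > 0"
    define \<epsilon> where "\<epsilon> = min (c / 2) 1"
    have eps: "0 < \<epsilon>" "\<epsilon> \<le> 1" "2 * \<epsilon> \<le> c" unfolding \<epsilon>_def using c by auto
    show "eventually (\<lambda>n. norm (X n - Tn n) \<le> c * norm (N n)) at_top"
      using main[OF eps(1,2)]
    proof (rule eventually_mono)
      fix n assume H: "(1 - 1 / real r - \<epsilon>) * N n \<le> Tn n \<and> Tn n \<le> X n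
        \<and> X n \<le> (1 - 1 / real r + \<epsilon>) * N n \<and> 0 < N n"
      have "X n - Tn n \<le> 2 * \<epsilon> * N n" using H by (simp add: algebra_simps)
      also have "\<dots> \<le> c * N n" using eps H by (intro mult_right_mono) auto
      finally show "norm (X n - Tn n) \<le> c * norm (N n)" using H by simp
    qed
  qed
  have part2: "((\<lambda>n. X n / N n) \<longlongrightarrow> 1 - 1 / real r) at_top"
    unfolding tendsto_iff
  proof (intro allI impI)
    fix e :: real assume e: "e > 0"
    define \<epsilon> where "\<epsilon> = min (e / 2) 1"
    have eps: "0 < \<epsilon>" "\<epsilon> \<le> 1" "\<epsilon> < e" unfolding \<epsilon>_def using e by auto
    show "eventually (\<lambda>n. dist (X n / N n) (1 - 1 / real r) < e) at_top"
      using main[OF eps(1,2)]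
    proof (rule eventually_mono)
      fix n assume H: "(1 - 1 / real r - \<epsilon>) * N n \<le> Tn n \<and> Tn n \<le> X n
        \<and> X n \<le> (1 - 1 / real r + \<epsilon>) * N n \<and> 0 < N n"
      have Np: "0 < N n" using H by simp
      have "1 - 1 / real r - \<epsilon> \<le> X n / N n" using H Np by (simp add: field_simps)
      moreover have "X n / N n \<le> 1 - 1 / real r + \<epsilon>" using H Np by (simp add: field_simps)
      ultimately have "\<bar>X n / N n - (1 - 1 / real r)\<bar> \<le> \<epsilon>" by linarith
      then show "dist (X n / N n) (1 - 1 / real r) < e" using eps by (simp add: dist_real_def)
    qed
  qed
  show ?thesis using part1 part2 unfolding X_def Tn_def N_def by simp
qed


end
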